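(* In the Rustichini setting, let $\epsilon>0$ and $\mathcal G\subset\mathcal F$, let $\Pi=\{\pi\in\Delta_k:\operatorname{dist}_1(\pi,\mathcal N(F))\ge\epsilon\text{ for all nonempty }F\in\mathcal G\}$, and assume $U=\bigcup_{F\in\mathcal F\setminus\mathcal G}F$ is nonempty. Define $f,g:\mathcal K\to[0,\infty]$ by $f(x)=\inf_{\pi\in\Pi}\Delta(\pi,x)$ (with $\inf\emptyset=+\infty$) and $g(x)=\operatorname{dist}_1(x,U)$. Then there is a constant $c_\epsilon>0$, depending only on the game, $\epsilon$ and $\mathcal G$, such that $f(x)\ge c_\epsilon\, g(x)$ for all $x\in\mathcal K$.
   Context: Rustichini setting: a $k$-action partial monitoring game with finite latent space $\mathcal Z$, loss $\mathcal L:[k]\times\mathcal Z\to[0,1]$, signal $\mathcal S:[k]\times\mathcal Z\to\Sigma$; $\mathcal K$ = probability simplex on $\mathcal Z$; $\Delta_k$ = probability simplex on $[k]$; $\mathcal L(\pi,x)=\sum_{a,z}\pi(a)x(z)\mathcal L(a,z)$; $\mathcal S(a,x)$ = law of $\mathcal S(a,z)$, $z\sim x$; $x\,\mathrm R\,y$ iff $\mathcal S(a,x)=\mathcal S(a,y)$ for all $a$; $\mathcal V(\pi,x)=\sup_{y\,\mathrm R\,x}\mathcal L(\pi,y)$; $\mathcal V_\star(x)=\min_{\pi\in\Delta_k}\mathcal V(\pi,x)$; $\Delta(\pi,x)=\mathcal V(\pi,x)-\mathcal V_\star(x)$. $m$ is the smallest integer with $\mathcal V_\star(x)=\min_{\alpha\in[m]}\mathcal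 V^m(x)_\alpha$ for some linear $\mathcal V^m:\mathcal K\to\mathbb R^m$; cells $P_\alpha=\{x\in\mathcal K:\mathcal V_\star(x)=\mathcal V^m(x)_\alpha\}$; $\mathcal F=\bigcup_{\alpha\in[m]}\operatorname{faces}(P_\alpha)$. $\mathcal N(x)=\{\pi\in\Delta_k:\Delta(\pi,x)=0\}$; for nonempty $F\in\mathcal F$, $\mathcal N(F)=\mathcal N(x)$ for any $x$ in the relative interior of $F$ (independent of the choice). $\operatorname{dist}_1(x,C)=\inf_{y\in C}\|x-y\|_1$. *)

theory Defs
  imports "HOL-Analysis.Analysis"
begin

text \<open>Rustichini setting. Actions are a finite type 'a (k = CARD('a)), the latent
space is a finite type 'z, signals take values in an arbitrary type 's.
Distributions are vectors in real^'a / real^'z.\<close>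

definition prob_simplex :: "(real^'n::finite) set" where
  "prob_simplex = {x. (\<forall>i. 0 \<le> x $ i) \<and> (\<Sum>i\<in>UNIV. x $ i) = 1}"

definition l1dist :: "real^'n::finite \<Rightarrow> real^'n \<Rightarrow> real" where
  "l1dist x y = (\<Sum>i\<in>UNIV. \<bar>x $ i - y $ i\<bar>)"

definition dist1 :: "real^'n::finite \<Rightarrow> (real^'n) set \<Rightarrow> real" where
  "dist1 x C = Inf (l1dist x ` C)"

definition sig_law :: "('a \<Rightarrow> 'z::finite \<Rightarrow> 's) \<Rightarrow> 'a \<Rightarrow> real^'z \<Rightarrow> 's \<Rightarrow> real" where
  "sig_law S a x = (\<lambda>\<sigma>. \<Sum>z\<in>{z. S a z = \<sigma>}. x $ z)"

definition indist :: "('a \<Rightarrow> 'z::finite \<Rightarrow> 's) \<Rightarrow> real^'z \<Rightarrow> real^'z \<Rightarrow> bool" where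
  "indist S x y \<longleftrightarrow> (\<forall>a. sig_law S a x = sig_law S a y)"

definition lossp :: "('a::finite \<Rightarrow> 'z::finite \<Rightarrow> real) \<Rightarrow> real^'a \<Rightarrow> real^'z \<Rightarrow> real" where
  "lossp L \<pi> x = (\<Sum>a\<in>UNIV. \<Sum>z\<in>UNIV. \<pi> $ a * x $ z * L a z)"

definition Vfun :: "('a::finite \<Rightarrow> 'z::finite \<Rightarrow> real) \<Rightarrow> ('a \<Rightarrow> 'z \<Rightarrow> 's)
    \<Rightarrow> real^'a \<Rightarrow> real^'z \<Rightarrow> real" where
  "Vfun L S \<pi> x = Sup {lossp L \<pi> y | y. y \<in> prob_simplex \<and> indist S y x}"

definition Vstar :: "('a::finite \<Rightarrow> 'z::finite \<Rightarrow> real) \<Rightarrow> ('a \<Rightarrow> 'z \<Rightarrow> 's)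
    \<Rightarrow> real^'z \<Rightarrow> real" where
  "Vstar L S x = Inf {Vfun L S \<pi> x | \<pi>. \<pi> \<in> (prob_simplex :: (real^'a) set)}"

definition Delta :: "('a::finite \<Rightarrow> 'z::finite \<Rightarrow> real) \<Rightarrow> ('a \<Rightarrow> 'z \<Rightarrow> 's)
    \<Rightarrow> real^'a \<Rightarrow> real^'z \<Rightarrow> real" where
  "Delta L S \<pi> x = Vfun L S \<pi> x - Vstar L S x"

text \<open>V^m given by linear functionals w 0, ..., w (m-1): V^m(x)_alpha = w alpha . x\<close>
definition is_rep :: "('a::finite \<Rightarrow> 'z::finite \<Rightarrow> real) \<Rightarrow> ('a \<Rightarrow> 'z \<Rightarrow> 's)
    \<Rightarrow> nat \<Rightarrow> (nat \<Rightarrow> real^'z) \<Rightarrow> bool" where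
  "is_rep L S m w \<longleftrightarrow> 1 \<le> m \<and>
     (\<forall>x\<in>prob_simplex. Vstar L S x = Min {w \<alpha> \<bullet> x | \<alpha>. \<alpha> < m})"

definition min_rep :: "('a::finite \<Rightarrow> 'z::finite \<Rightarrow> real) \<Rightarrow> ('a \<Rightarrow> 'z \<Rightarrow> 's)
    \<Rightarrow> nat \<Rightarrow> (nat \<Rightarrow> real^'z) \<Rightarrow> bool" where
  "min_rep L S m w \<longleftrightarrow> is_rep L S m w \<and>
     (\<forall>m' (w' :: nat \<Rightarrow> real^'z). is_rep L S m' w' \<longrightarrow> m \<le> m')"

definition cell :: "('a::finite \<Rightarrow> 'z::finite \<Rightarrow> real) \<Rightarrow> ('a \<Rightarrow> 'z \<Rightarrow> 's)
    \<Rightarrow> (nat \<Rightarrow> real^'z) \<Rightarrow> nat \<Rightarrow> (real^'z) set" where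
  "cell L S w \<alpha> = {x\<in>prob_simplex. Vstar L S x = w \<alpha> \<bullet> x}"

definition faces_F :: "('a::finite \<Rightarrow> 'z::finite \<Rightarrow> real) \<Rightarrow> ('a \<Rightarrow> 'z \<Rightarrow> 's)
    \<Rightarrow> nat \<Rightarrow> (nat \<Rightarrow> real^'z) \<Rightarrow> (real^'z) set set" where
  "faces_F L S m w = {F. \<exists>\<alpha><m. F face_of cell L S w \<alpha>}"

definition Nset :: "('a::finite \<Rightarrow> 'z::finite \<Rightarrow> real) \<Rightarrow> ('a \<Rightarrow> 'z \<Rightarrow> 's)
    \<Rightarrow> real^'z \<Rightarrow> (real^'a) set" where
  "Nset L S x = {\<pi>\<in>prob_simplex. Delta L S \<pi> x = 0}"

text \<open>N(F) = N(x) for a (any) point x of the relative interior of F.\<close>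
definition NF :: "('a::finite \<Rightarrow> 'z::finite \<Rightarrow> real) \<Rightarrow> ('a \<Rightarrow> 'z \<Rightarrow> 's)
    \<Rightarrow> (real^'z) set \<Rightarrow> (real^'a) set" where
  "NF L S F = Nset L S (SOME x. x \<in> rel_interior F)"

end

theory Submission
  imports Defs
begin


lemma simplex_nonneg: "x \<in> prob_simplex \<Longrightarrow> 0 \<le> x $ i"
  by (simp add: prob_simplex_def)

lemma simplex_sum: "x \<in> prob_simplex \<Longrightarrow> (\<Sum>i\<in>UNIV. x $ i) = 1"
  by (simp add: prob_simplex_def)

lemma simplex_le1: assumes "x \<in> prob_simplex" shows "x $ i \<le> 1"
proof -
  have "x $ i \<le> (\<Sum>j\<in>UNIV. x $ j)"
    by (rule member_le_sum) (use assms simplex_nonneg in auto)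
  then show ?thesis using simplex_sum[OF assms] by simp
qed

lemma simplex_comb:
  assumes "x \<in> prob_simplex" "y \<in> prob_simplex" "0 \<le> t" "t \<le> 1"
  shows "(1 - t) *\<^sub>R x + t *\<^sub>R y \<in> prob_simplex"
proof -
  have "(\<Sum>i\<in>UNIV. (1 - t) * x $ i + t * y $ i) = (1 - t) * (\<Sum>i\<in>UNIV. x $ i) + t * (\<Sum>i\<in>UNIV. y $ i)"
    by (simp add: sum.distrib sum_distrib_left)
  moreover have "0 \<le> (1 - t) * x $ i + t * y $ i" for i
    using assms simplex_nonneg[of x i] simplex_nonneg[of y i]
    by (intro add_nonneg_nonneg mult_nonneg_nonneg) auto
  ultimately show ?thesis using simplex_sum[OF assms(1)] simplex_sum[OF assms(2)]
    by (simp add: prob_simplex_def)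
qed

lemma l1_nonneg: "0 \<le> l1dist x y" by (simp add: l1dist_def sum_nonneg)
lemma l1_self: "l1dist x x = 0" by (simp add: l1dist_def)
lemma l1_tri: "l1dist x z \<le> l1dist x y + l1dist y z"
  unfolding l1dist_def sum.distrib[symmetric] by (rule sum_mono) auto
lemma l1_sym: "l1dist x y = l1dist y x" by (simp add: l1dist_def abs_minus_commute)
lemma l1_le_dist: "l1dist x y \<le> real CARD('n) * dist x (y::real^'n::finite)"
proof -
  have c: "\<And>i. \<bar>x $ i - y $ i\<bar> \<le> dist x y"
    by (metis component_le_norm_cart dist_norm vector_minus_component)
  have "l1dist x y \<le> (\<Sum>i\<in>(UNIV::'n set). dist x y)" unfolding l1dist_def
    using c by (intro sum_mono) auto
  then show ?thesis by simp
qed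

lemma l1_simplex_le2:
  assumes "x \<in> prob_simplex" "y \<in> prob_simplex" shows "l1dist x y \<le> 2"
proof -
  have "l1dist x y \<le> (\<Sum>i\<in>UNIV. x $ i + y $ i)" unfolding l1dist_def
    by (rule sum_mono) (use assms simplex_nonneg in \<open>auto simp: abs_le_iff\<close>)
  also have "\<dots> = 2" using simplex_sum[OF assms(1)] simplex_sum[OF assms(2)] by (simp add: sum.distrib)
  finally show ?thesis .
qed

lemma l1_comb:
  assumes "t \<le> 1" shows "l1dist ((1 - t) *\<^sub>R x + t *\<^sub>R y) y = (1 - t) * l1dist x y"
proof -
  have "\<And>i. \<bar>(1 - t) * x $ i + t * y $ i - y $ i\<bar> = (1 - t) * \<bar>x $ i - y $ i\<bar>"
  proof -
    fix i
    have "(1 - t) * x $ i + t * y $ i - y $ i = (1 - t) * (x $ i - y $ i)" by (simp add: algebra_simps)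
    then show "\<bar>(1 - t) * x $ i + t * y $ i - y $ i\<bar> = (1 - t) * \<bar>x $ i - y $ i\<bar>"
      using assms by (simp add: abs_mult)
  qed
  then show ?thesis by (simp add: l1dist_def sum_distrib_left)
qed

lemma dist1_le: "u \<in> C \<Longrightarrow> dist1 x C \<le> l1dist x u"
  unfolding dist1_def by (rule cInf_lower) (auto intro: bdd_belowI2[where m=0] simp: l1_nonneg)

lemma dist1_nonneg: "C \<noteq> {} \<Longrightarrow> 0 \<le> dist1 x C"
  unfolding dist1_def by (rule cInf_greatest) (auto simp: l1_nonneg)

lemma dist1_lip: assumes C: "C \<noteq> {}" shows "dist1 x C \<le> l1dist x y + dist1 y C"
proof -
  have "dist1 x C - l1dist x y \<le> dist1 y C" unfolding dist1_def[of y]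
  proof (rule cInf_greatest)
    show "l1dist y ` C \<noteq> {}" using C by simp
    fix v assume "v \<in> l1dist y ` C"
    then obtain u where u: "u \<in> C" "v = l1dist y u" by auto
    have "dist1 x C \<le> l1dist x u" by (rule dist1_le[OF u(1)])
    also have "\<dots> \<le> l1dist x y + l1dist y u" by (rule l1_tri)
    finally show "dist1 x C - l1dist x y \<le> v" using u by simp
  qed
  then show ?thesis by simp
qed

lemma dist1_cont: "continuous_on UNIV (\<lambda>x::real^'n::finite. dist1 x C)"
proof (cases "C = {}")
  case True then show ?thesis by (simp add: dist1_def)
next
  case False
  have "(real CARD('n))-lipschitz_on UNIV (\<lambda>x::real^'n::finite. dist1 x C)"
  proof (rule lipschitz_onI)
    fix x y :: "real^'n"
    have "dist1 x C \<le> l1dist x y + dist1 y C" "dist1 y C \<le> l1dist x y + dist1 x C"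
      using dist1_lip[OF False] l1_sym by metis+
    then have "dist (dist1 x C) (dist1 y C) \<le> l1dist x y" by (simp add: dist_real_def abs_le_iff)
    also have "\<dots> \<le> real CARD('n) * dist x y" by (rule l1_le_dist)
    finally show "dist (dist1 x C) (dist1 y C) \<le> real CARD('n) * dist x y" .
  qed simp
  then show ?thesis by (rule lipschitz_on_continuous_on)
qed

lemma simplex_polytope: "polytope (prob_simplex :: (real^'n::finite) set)"
proof -
  have eq: "prob_simplex = (\<Inter>i\<in>UNIV. {x::real^'n. (- axis i 1) \<bullet> x \<le> 0}) \<inter> {x::real^'n. (\<chi> i. 1) \<bullet> x = 1}"
    by (auto simp: prob_simplex_def inner_axis' inner_vec_def[of "\<chi> i. 1"])
  have "polyhedron (prob_simplex :: (real^'n::finite) set)"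
    unfolding eq by (intro polyhedron_Int polyhedron_Inter polyhedron_hyperplane)
      (auto intro: polyhedron_halfspace_le polyhedron_halfspace_ge)
  moreover have "bounded (prob_simplex :: (real^'n::finite) set)"
    unfolding bounded_iff
  proof (intro exI ballI)
    fix x :: "real^'n" assume x: "x \<in> prob_simplex"
    have "norm x \<le> (\<Sum>i\<in>UNIV. \<bar>x $ i\<bar>)" by (rule norm_le_l1_cart)
    also have "\<dots> = 1" using x simplex_nonneg simplex_sum by (simp add: prob_simplex_def)
    finally show "norm x \<le> 1" .
  qed
  ultimately show ?thesis by (simp add: polytope_eq_bounded_polyhedron)
qed

lemma simplex_compact: "compact (prob_simplex :: (real^'n::finite) set)"
  by (rule polytope_imp_compact[OF simplex_polytope])


lemma finite_min_const:
  fixes d :: "'x \<Rightarrow> real"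
  assumes "finite A" "\<forall>a\<in>A. \<exists>c>0. \<forall>\<pi>\<in>P. \<forall>x\<in>B a. c * d x \<le> f \<pi> x" "\<And>x. 0 \<le> d x"
  shows "\<exists>c>0. \<forall>a\<in>A. \<forall>\<pi>\<in>P. \<forall>x\<in>B a. c * d x \<le> f \<pi> x"
  using assms(1,2)
proof (induction A rule: finite_induct)
  case empty then show ?case by (intro exI[of _ "1::real"]) auto
next
  case (insert a A)
  then obtain c1 where c1: "c1 > 0" "\<forall>b\<in>A. \<forall>\<pi>\<in>P. \<forall>x\<in>B b. c1 * d x \<le> f \<pi> x" by auto
  from insert.prems obtain c2 where c2: "c2 > 0" "\<forall>\<pi>\<in>P. \<forall>x\<in>B a. c2 * d x \<le> f \<pi> x" by auto
  have mono: "min c1 c2 * d x \<le> ci * d x" if "min c1 c2 \<le> ci" for ci x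
    using that assms(3)[of x] by (intro mult_right_mono) auto
  show ?case
  proof (intro exI[of _ "min c1 c2"] conjI ballI)
    show "0 < min c1 c2" using c1 c2 by simp
    fix b \<pi> x assume b: "b \<in> insert a A" and \<pi>: "\<pi> \<in> P" and x: "x \<in> B b"
    show "min c1 c2 * d x \<le> f \<pi> x"
    proof (cases "b = a")
      case True then show ?thesis using c2 \<pi> x mono[of c2 x] by force
    next
      case False then have "b \<in> A" using b by simp
      then show ?thesis using c1 \<pi> x mono[of c1 x] by force
    qed
  qed
qed


context
  fixes L :: "'a::finite \<Rightarrow> 'z::finite \<Rightarrow> real" and S :: "'a \<Rightarrow> 'z \<Rightarrow> 's"
  assumes L01: "\<forall>a z. 0 \<le> L a z \<and> L a z \<le> 1"
begin

lemma lossp_nonneg: "\<pi> \<in> prob_simplex \<Longrightarrow> y \<in> prob_simplex \<Longrightarrow> 0 \<le> lossp L \<pi> y"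
  unfolding lossp_def using L01
  by (intro sum_nonneg mult_nonneg_nonneg) (auto simp: simplex_nonneg)

lemma lossp_alt: "lossp L \<pi> y = (\<Sum>a\<in>UNIV. \<pi> $ a * (\<Sum>z\<in>UNIV. y $ z * L a z))"
  by (simp add: lossp_def sum_distrib_left mult.assoc)

lemma inner_le1:
  assumes "y \<in> prob_simplex" shows "0 \<le> (\<Sum>z\<in>UNIV. y $ z * L a z)" "(\<Sum>z\<in>UNIV. y $ z * L a z) \<le> 1"
proof -
  show "0 \<le> (\<Sum>z\<in>UNIV. y $ z * L a z)"
    using L01 assms by (intro sum_nonneg mult_nonneg_nonneg) (auto simp: simplex_nonneg)
  have "(\<Sum>z\<in>UNIV. y $ z * L a z) \<le> (\<Sum>z\<in>UNIV. y $ z)"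
    using L01 assms by (intro sum_mono mult_left_le) (auto simp: simplex_nonneg)
  then show "(\<Sum>z\<in>UNIV. y $ z * L a z) \<le> 1" using simplex_sum[OF assms] by simp
qed

lemma lossp_le1: assumes "\<pi> \<in> prob_simplex" "y \<in> prob_simplex" shows "lossp L \<pi> y \<le> 1"
proof -
  have "lossp L \<pi> y \<le> (\<Sum>a\<in>UNIV. \<pi> $ a)" unfolding lossp_alt
    using assms inner_le1[OF assms(2)] by (intro sum_mono mult_left_le) (auto simp: simplex_nonneg)
  then show ?thesis using simplex_sum[OF assms(1)] by simp
qed

lemma lossp_lip:
  assumes "\<pi> \<in> prob_simplex" "\<pi>' \<in> prob_simplex" "y \<in> prob_simplex"
  shows "lossp L \<pi> y \<le> lossp L \<pi>' y + l1dist \<pi> \<pi>'"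
proof -
  have "lossp L \<pi> y - lossp L \<pi>' y = (\<Sum>a\<in>UNIV. (\<pi> $ a - \<pi>' $ a) * (\<Sum>z\<in>UNIV. y $ z * L a z))"
    unfolding lossp_alt by (simp add: sum_subtractf left_diff_distrib)
  also have "\<dots> \<le> (\<Sum>a\<in>UNIV. \<bar>\<pi> $ a - \<pi>' $ a\<bar>)"
  proof (rule sum_mono)
    fix a
    have "(\<pi> $ a - \<pi>' $ a) * (\<Sum>z\<in>UNIV. y $ z * L a z) \<le> \<bar>\<pi> $ a - \<pi>' $ a\<bar> * (\<Sum>z\<in>UNIV. y $ z * L a z)"
      using inner_le1[OF assms(3)] by (intro mult_right_mono) auto
    also have "\<dots> \<le> \<bar>\<pi> $ a - \<pi>' $ a\<bar>" using inner_le1[OF assms(3)] by (intro mult_left_le) auto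
    finally show "(\<pi> $ a - \<pi>' $ a) * (\<Sum>z\<in>UNIV. y $ z * L a z) \<le> \<bar>\<pi> $ a - \<pi>' $ a\<bar>" .
  qed
  finally show ?thesis by (simp add: l1dist_def)
qed

lemma lossp_comb: "lossp L \<pi> ((1 - t) *\<^sub>R y1 + t *\<^sub>R y2) = (1 - t) * lossp L \<pi> y1 + t * lossp L \<pi> y2"
  unfolding lossp_def sum_distrib_left sum.distrib[symmetric]
  by (intro sum.cong refl) (simp add: algebra_simps)

lemma sig_law_comb: "sig_law S a ((1 - t) *\<^sub>R y1 + t *\<^sub>R y2) \<sigma> = (1 - t) * sig_law S a y1 \<sigma> + t * sig_law S a y2 \<sigma>"
  by (simp add: sig_law_def sum.distrib sum_distrib_left)

lemma indist_comb: "indist S y1 x1 \<Longrightarrow> indist S y2 x2 \<Longrightarrow>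
   indist S ((1 - t) *\<^sub>R y1 + t *\<^sub>R y2) ((1 - t) *\<^sub>R x1 + t *\<^sub>R x2)"
  by (auto simp: indist_def fun_eq_iff sig_law_comb)

lemma indist_refl: "indist S x x" by (simp add: indist_def)

lemma Y_ne: "x \<in> prob_simplex \<Longrightarrow> {lossp L \<pi> y | y. y \<in> prob_simplex \<and> indist S y x} \<noteq> {}"
  using indist_refl by blast

lemma Y_bdd: "\<pi> \<in> prob_simplex \<Longrightarrow> bdd_above {lossp L \<pi> y | y. y \<in> prob_simplex \<and> indist S y x}"
  by (rule bdd_aboveI[where M=1]) (auto intro: lossp_le1)

lemma Vfun_ge: "\<pi> \<in> prob_simplex \<Longrightarrow> y \<in> prob_simplex \<Longrightarrow> indist S y x \<Longrightarrow> lossp L \<pi> y \<le> Vfun L S \<pi> x"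
  unfolding Vfun_def by (rule cSup_upper) (auto intro: Y_bdd)

lemma Vfun_nonneg: "\<pi> \<in> prob_simplex \<Longrightarrow> x \<in> prob_simplex \<Longrightarrow> 0 \<le> Vfun L S \<pi> x"
  using Vfun_ge[of \<pi> x x] lossp_nonneg[of \<pi> x] indist_refl by fastforce

lemma Vfun_lip:
  assumes "\<pi> \<in> prob_simplex" "\<pi>' \<in> prob_simplex" "x \<in> prob_simplex"
  shows "Vfun L S \<pi> x \<le> Vfun L S \<pi>' x + l1dist \<pi> \<pi>'"
  unfolding Vfun_def[of L S \<pi>]
proof (rule cSup_least)
  show "{lossp L \<pi> y | y. y \<in> prob_simplex \<and> indist S y x} \<noteq> {}" using Y_ne[OF assms(3)] .
  fix v assume "v \<in> {lossp L \<pi> y | y. y \<in> prob_simplex \<and> indist S y x}"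
  then obtain y where y: "y \<in> prob_simplex" "indist S y x" "v = lossp L \<pi> y" by auto
  have "v \<le> lossp L \<pi>' y + l1dist \<pi> \<pi>'" using lossp_lip[OF assms(1,2) y(1)] y(3) by simp
  also have "\<dots> \<le> Vfun L S \<pi>' x + l1dist \<pi> \<pi>'" using Vfun_ge[OF assms(2) y(1,2)] by simp
  finally show "v \<le> Vfun L S \<pi>' x + l1dist \<pi> \<pi>'" .
qed

lemma Vstar_le: "\<pi> \<in> prob_simplex \<Longrightarrow> x \<in> prob_simplex \<Longrightarrow> Vstar L S x \<le> Vfun L S \<pi> x"
  unfolding Vstar_def
  by (rule cInf_lower) (auto intro!: bdd_belowI[where m=0] Vfun_nonneg)

lemma Delta_nonneg: "\<pi> \<in> prob_simplex \<Longrightarrow> x \<in> prob_simplex \<Longrightarrow> 0 \<le> Delta L S \<pi> x"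
  using Vstar_le by (simp add: Delta_def)

lemma Vfun_concave:
  assumes pi: "\<pi> \<in> prob_simplex" and x1: "x1 \<in> prob_simplex" and x2: "x2 \<in> prob_simplex"
    and t: "0 \<le> t" "t \<le> 1"
  shows "(1 - t) * Vfun L S \<pi> x1 + t * Vfun L S \<pi> x2 \<le> Vfun L S \<pi> ((1 - t) *\<^sub>R x1 + t *\<^sub>R x2)"
proof (rule field_le_epsilon)
  fix e :: real assume e: "0 < e"
  have "Vfun L S \<pi> x1 - e < Sup {lossp L \<pi> y | y. y \<in> prob_simplex \<and> indist S y x1}"
    using e by (simp add: Vfun_def)
  then obtain v1 where "v1 \<in> {lossp L \<pi> y | y. y \<in> prob_simplex \<and> indist S y x1}" "Vfun L S \<pi> x1 - e < v1"
    using less_cSupD[OF Y_ne[OF x1]] by blast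
  then obtain y1 where y1: "y1 \<in> prob_simplex" "indist S y1 x1" "Vfun L S \<pi> x1 - e < lossp L \<pi> y1" by auto
  have "Vfun L S \<pi> x2 - e < Sup {lossp L \<pi> y | y. y \<in> prob_simplex \<and> indist S y x2}"
    using e by (simp add: Vfun_def)
  then obtain v2 where "v2 \<in> {lossp L \<pi> y | y. y \<in> prob_simplex \<and> indist S y x2}" "Vfun L S \<pi> x2 - e < v2"
    using less_cSupD[OF Y_ne[OF x2]] by blast
  then obtain y2 where y2: "y2 \<in> prob_simplex" "indist S y2 x2" "Vfun L S \<pi> x2 - e < lossp L \<pi> y2" by auto
  have a: "(1 - t) * (Vfun L S \<pi> x1 - e) \<le> (1 - t) * lossp L \<pi> y1"
    using y1(3) t by (intro mult_left_mono) auto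
  have b: "t * (Vfun L S \<pi> x2 - e) \<le> t * lossp L \<pi> y2"
    using y2(3) t by (intro mult_left_mono) auto
  have "(1 - t) * Vfun L S \<pi> x1 + t * Vfun L S \<pi> x2 - e \<le> (1 - t) * lossp L \<pi> y1 + t * lossp L \<pi> y2"
    using a b by (simp add: algebra_simps)
  also have "\<dots> = lossp L \<pi> ((1 - t) *\<^sub>R y1 + t *\<^sub>R y2)" by (simp add: lossp_comb)
  also have "\<dots> \<le> Vfun L S \<pi> ((1 - t) *\<^sub>R x1 + t *\<^sub>R x2)"
    by (rule Vfun_ge[OF pi simplex_comb[OF y1(1) y2(1) t] indist_comb[OF y1(2) y2(2)]])
  finally show "(1 - t) * Vfun L S \<pi> x1 + t * Vfun L S \<pi> x2 \<le> Vfun L S \<pi> ((1 - t) *\<^sub>R x1 + t *\<^sub>R x2) + e"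
    by simp
qed

lemma Delta_cont: "x0 \<in> prob_simplex \<Longrightarrow> continuous_on prob_simplex (\<lambda>\<pi>::real^'a. Delta L S \<pi> x0)"
proof -
  assume x0: "x0 \<in> prob_simplex"
  have "(real CARD('a))-lipschitz_on prob_simplex (\<lambda>\<pi>::real^'a. Delta L S \<pi> x0)"
  proof (rule lipschitz_onI)
    fix p q :: "real^'a" assume p: "p \<in> prob_simplex" and q: "q \<in> prob_simplex"
    have "Vfun L S p x0 \<le> Vfun L S q x0 + l1dist p q" "Vfun L S q x0 \<le> Vfun L S p x0 + l1dist p q"
      using Vfun_lip[OF p q x0] Vfun_lip[OF q p x0] l1_sym by metis+
    then have "dist (Delta L S p x0) (Delta L S q x0) \<le> l1dist p q"
      by (simp add: dist_real_def abs_le_iff Delta_def)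
    also have "\<dots> \<le> real CARD('a) * dist p q" by (rule l1_le_dist)
    finally show "dist (Delta L S p x0) (Delta L S q x0) \<le> real CARD('a) * dist p q" .
  qed simp
  then show ?thesis by (rule lipschitz_on_continuous_on)
qed

lemma delta_pos:
  assumes x0: "x0 \<in> prob_simplex" and eps: "(\<epsilon>::real) > 0"
  shows "\<exists>\<delta>>0. \<forall>\<pi>\<in>(prob_simplex::(real^'a) set). \<epsilon> \<le> dist1 \<pi> (Nset L S x0) \<longrightarrow> \<delta> \<le> Delta L S \<pi> x0"
proof (cases "(prob_simplex::(real^'a) set) \<inter> {\<pi>. \<epsilon> \<le> dist1 \<pi> (Nset L S x0)} = {}")
  case True then show ?thesis by (intro exI[of _ 1]) auto
next
  case False
  let ?K = "(prob_simplex::(real^'a) set) \<inter> {\<pi>. \<epsilon> \<le> dist1 \<pi> (Nset L S x0)}"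
  have "compact ?K"
    by (rule compact_Int_closed[OF simplex_compact closed_Collect_le[OF continuous_on_const dist1_cont]])
  moreover have "continuous_on ?K (\<lambda>\<pi>. Delta L S \<pi> x0)"
    using Delta_cont[OF x0] by (rule continuous_on_subset) auto
  ultimately obtain p where p: "p \<in> ?K" "\<forall>\<pi>\<in>?K. Delta L S p x0 \<le> Delta L S \<pi> x0"
    using continuous_attains_inf[OF _ False] by blast
  have pos: "0 < Delta L S p x0"
  proof (rule ccontr)
    assume "\<not> 0 < Delta L S p x0"
    with Delta_nonneg[of p x0] p(1) x0 have "Delta L S p x0 = 0" by auto
    then have "p \<in> Nset L S x0" using p(1) by (simp add: Nset_def)
    then have "dist1 p (Nset L S x0) \<le> 0" using dist1_le[of p "Nset L S x0" p] by (simp add: l1_self)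
    then show False using p(1) eps by auto
  qed
  show ?thesis using pos p by (intro exI[of _ "Delta L S p x0"]) auto
qed


context
  fixes m :: nat and w :: "nat \<Rightarrow> real^'z" and \<epsilon> :: real and G :: "(real^'z) set set"
  assumes rep: "min_rep L S m w" and eps: "\<epsilon> > 0" and GF: "G \<subseteq> faces_F L S m w"
    and Une: "\<Union> (faces_F L S m w - G) \<noteq> {}"
begin

abbreviation "UU \<equiv> \<Union> (faces_F L S m w - G)"
abbreviation "PiS \<equiv> {\<pi>\<in>(prob_simplex::(real^'a) set). \<forall>F\<in>G. F \<noteq> {} \<longrightarrow> \<epsilon> \<le> dist1 \<pi> (NF L S F)}"

lemma m_pos: "1 \<le> m" using rep by (simp add: min_rep_def is_rep_def)

lemma Vstar_eq: "x \<in> prob_simplex \<Longrightarrow> Vstar L S x = Min {w \<beta> \<bullet> x | \<beta>. \<beta> < m}"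
  using rep by (simp add: min_rep_def is_rep_def)

lemma Aset_eq: "{w \<beta> \<bullet> x | \<beta>. \<beta> < m} = (\<lambda>\<beta>. w \<beta> \<bullet> x) ` {..<m}" by auto

lemma Aset_fin: "finite {w \<beta> \<bullet> x | \<beta>. \<beta> < m}" unfolding Aset_eq by simp

lemma cell_eq:
  assumes \<alpha>: "\<alpha> < m"
  shows "cell L S w \<alpha> = prob_simplex \<inter> (\<Inter>\<beta>\<in>{..<m}. {x. (w \<alpha> - w \<beta>) \<bullet> x \<le> 0})"
proof (intro equalityI subsetI)
  fix x assume "x \<in> cell L S w \<alpha>"
  then have x: "x \<in> prob_simplex" "Vstar L S x = w \<alpha> \<bullet> x" by (auto simp: cell_def)
  have "w \<alpha> \<bullet> x \<le> w \<beta> \<bullet> x" if "\<beta> < m" for \<beta>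
  proof -
    have "Min {w \<beta> \<bullet> x | \<beta>. \<beta> < m} \<le> w \<beta> \<bullet> x" using that by (intro Min_le Aset_fin) auto
    then show ?thesis using x Vstar_eq by simp
  qed
  then show "x \<in> prob_simplex \<inter> (\<Inter>\<beta>\<in>{..<m}. {x. (w \<alpha> - w \<beta>) \<bullet> x \<le> 0})"
    using x by (auto simp: inner_diff_left)
next
  fix x assume x: "x \<in> prob_simplex \<inter> (\<Inter>\<beta>\<in>{..<m}. {x. (w \<alpha> - w \<beta>) \<bullet> x \<le> 0})"
  have "Min {w \<beta> \<bullet> x | \<beta>. \<beta> < m} = w \<alpha> \<bullet> x"
  proof (rule Min_eqI[OF Aset_fin])
    fix y assume "y \<in> {w \<beta> \<bullet> x | \<beta>. \<beta> < m}"
    then show "w \<alpha> \<bullet> x \<le> y" using x by (auto simp: inner_diff_left)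
  qed (use \<alpha> in auto)
  then show "x \<in> cell L S w \<alpha>" using x Vstar_eq by (auto simp: cell_def)
qed

lemma cell_sub: "cell L S w \<alpha> \<subseteq> prob_simplex" by (auto simp: cell_def)

lemma cell_polytope: assumes \<alpha>: "\<alpha> < m" shows "polytope (cell L S w \<alpha>)"
proof -
  have "polyhedron (cell L S w \<alpha>)" unfolding cell_eq[OF \<alpha>]
    by (intro polyhedron_Int polyhedron_Inter polytope_imp_polyhedron[OF simplex_polytope])
      (auto intro: polyhedron_halfspace_le)
  moreover have "bounded (cell L S w \<alpha>)"
    by (rule bounded_subset[OF polytope_imp_bounded[OF simplex_polytope] cell_sub])
  ultimately show ?thesis by (simp add: polytope_eq_bounded_polyhedron)
qed

lemma in_some_cell: assumes x: "x \<in> prob_simplex" shows "\<exists>\<alpha><m. x \<in> cell L S w \<alpha>"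
proof -
  have "w 0 \<bullet> x \<in> {w \<beta> \<bullet> x | \<beta>. \<beta> < m}" using m_pos by auto
  then have "{w \<beta> \<bullet> x | \<beta>. \<beta> < m} \<noteq> {}" by blast
  then have "Min {w \<beta> \<bullet> x | \<beta>. \<beta> < m} \<in> {w \<beta> \<bullet> x | \<beta>. \<beta> < m}" by (intro Min_in Aset_fin)
  then obtain \<beta> where "\<beta> < m" "Min {w \<beta> \<bullet> x | \<beta>. \<beta> < m} = w \<beta> \<bullet> x" by auto
  then show ?thesis using x Vstar_eq[OF x] by (auto simp: cell_def)
qed

lemma U_sub: "UU \<subseteq> prob_simplex"
proof
  fix x assume "x \<in> UU"
  then obtain F \<alpha> where "x \<in> F" "\<alpha> < m" "F face_of cell L S w \<alpha>" by (auto simp: faces_F_def)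
  then show "x \<in> prob_simplex" using face_of_imp_subset cell_sub by blast
qed

lemma distU_le2: assumes x: "x \<in> prob_simplex" shows "dist1 x UU \<le> 2"
proof -
  obtain u where u: "u \<in> UU" using Une by blast
  have "dist1 x UU \<le> l1dist x u" by (rule dist1_le[OF u])
  also have "\<dots> \<le> 2" using l1_simplex_le2[OF x] u U_sub by blast
  finally show ?thesis .
qed

lemma distU_nonneg: "0 \<le> dist1 x UU" by (rule dist1_nonneg[OF Une])

lemma face_bound:
  assumes \<alpha>: "\<alpha> < m"
  shows "F face_of cell L S w \<alpha> \<Longrightarrow> \<exists>c>0. \<forall>\<pi>\<in>PiS. \<forall>x\<in>F. c * dist1 x UU \<le> Delta L S \<pi> x"
proof (induction "nat (aff_dim F + 1)" arbitrary: F rule: less_induct)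
  case less
  have polyF: "polytope F" using face_of_polytope_polytope[OF cell_polytope[OF \<alpha>] less.prems] .
  have convF: "convex F" by (rule polytope_imp_convex[OF polyF])
  have bndF: "bounded F" by (rule polytope_imp_bounded[OF polyF])
  have FP: "F \<subseteq> cell L S w \<alpha>" by (rule face_of_imp_subset[OF less.prems])
  have FSX: "F \<subseteq> prob_simplex" using FP cell_sub by blast
  have Ffaces: "F \<in> faces_F L S m w" using less.prems \<alpha> by (auto simp: faces_F_def)
  show ?case
  proof (cases "F \<in> G \<and> F \<noteq> {}")
    case False
    show ?thesis
    proof (intro exI[of _ 1] conjI ballI)
      fix \<pi> x assume \<pi>: "\<pi> \<in> PiS" and x: "x \<in> F"
      with False have "F = {} \<or> F \<notin> G" by auto
      then have "x \<in> UU" using x Ffaces by auto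
      then have "dist1 x UU \<le> 0" using dist1_le[of x UU x] by (simp add: l1_self)
      moreover have "0 \<le> Delta L S \<pi> x" using Delta_nonneg \<pi> x FSX by auto
      ultimately show "1 * dist1 x UU \<le> Delta L S \<pi> x" by simp
    qed simp
  next
    case True
    define x0 where "x0 = (SOME x. x \<in> rel_interior F)"
    have "rel_interior F \<noteq> {}" using True rel_interior_eq_empty[OF convF] by simp
    then have x0ri: "x0 \<in> rel_interior F" unfolding x0_def by (metis ex_in_conv someI_ex)
    have x0F: "x0 \<in> F" using x0ri rel_interior_subset by blast
    have x0SX: "x0 \<in> prob_simplex" using x0F FSX by blast
    have NFeq: "NF L S F = Nset L S x0" by (simp add: NF_def x0_def)
    obtain \<delta> where \<delta>: "\<delta> > 0" "\<forall>\<pi>\<in>(prob_simplex::(real^'a) set). \<epsilon> \<le> dist1 \<pi> (Nset L S x0) \<longrightarrow> \<delta> \<le> Delta L S \<pi> x0"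
      using delta_pos[OF x0SX eps] by blast
    have \<delta>Pi: "\<delta> \<le> Delta L S \<pi> x0" if "\<pi> \<in> PiS" for \<pi>
      using \<delta>(2) that True NFeq by auto
    let ?Sub = "{F'. F' face_of F \<and> F' \<noteq> F}"
    have finSub: "finite ?Sub" by (rule finite_subset[OF _ finite_polytope_faces[OF polyF]]) auto
    have "\<forall>F'\<in>?Sub. \<exists>c>0. \<forall>\<pi>\<in>PiS. \<forall>x\<in>F'. c * dist1 x UU \<le> Delta L S \<pi> x"
    proof
      fix F' assume F': "F' \<in> ?Sub"
      have "aff_dim F' < aff_dim F" using face_of_aff_dim_lt[OF convF] F' by auto
      moreover have "aff_dim F' \<ge> -1" by (rule aff_dim_geq)
      ultimately have lt: "nat (aff_dim F' + 1) < nat (aff_dim F + 1)" by (simp add: nat_less_eq_zless)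
      have "F' face_of cell L S w \<alpha>" using F' less.prems face_of_trans by blast
      then show "\<exists>c>0. \<forall>\<pi>\<in>PiS. \<forall>x\<in>F'. c * dist1 x UU \<le> Delta L S \<pi> x" using less.hyps[OF lt] by blast
    qed
    from finite_min_const[OF finSub this distU_nonneg]
    obtain c' where c': "c' > 0" "\<forall>F'\<in>?Sub. \<forall>\<pi>\<in>PiS. \<forall>x\<in>F'. c' * dist1 x UU \<le> Delta L S \<pi> x"
      by blast
    define c where "c = min (\<delta>/4) (c'/2)"
    have c_pos: "c > 0" using \<delta> c' by (simp add: c_def)
    have c_le: "c \<le> \<delta>/4" "c \<le> c'/2" by (auto simp: c_def)
    show ?thesis
    proof (intro exI[of _ c] conjI ballI)
      show "c > 0" by (rule c_pos)
      fix \<pi> x assume \<pi>: "\<pi> \<in> PiS" and x: "x \<in> F"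
      have \<pi>SX: "\<pi> \<in> prob_simplex" using \<pi> by simp
      have xSX: "x \<in> prob_simplex" using x FSX by blast
      have d0: "dist1 x UU \<le> 2" "0 \<le> dist1 x UU" using distU_le2[OF xSX] distU_nonneg by auto
      show "c * dist1 x UU \<le> Delta L S \<pi> x"
      proof (cases "x = x0")
        case True
        have "c * dist1 x UU \<le> (\<delta>/4) * 2" using d0 c_le c_pos by (intro mult_mono) auto
        also have "\<dots> \<le> \<delta>" using \<delta> by simp
        also have "\<dots> \<le> Delta L S \<pi> x" using \<delta>Pi[OF \<pi>] True by simp
        finally show ?thesis by simp
      next
        case False
        obtain z where z: "z \<in> rel_frontier F" "x \<in> closed_segment x0 z"
          using segment_to_rel_frontier_aux[OF convF bndF x0ri x] False by metis
        obtain F' where F': "F' \<in> ?Sub" "z \<in> F'"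
          using z(1) rel_frontier_of_polyhedron_alt[OF polytope_imp_polyhedron[OF polyF]] by blast
        have zF: "z \<in> F" using F' face_of_imp_subset by blast
        have zSX: "z \<in> prob_simplex" using zF FSX by blast
        obtain u where u: "0 \<le> u" "u \<le> 1" "x = (1 - u) *\<^sub>R x0 + u *\<^sub>R z"
          using z(2) by (auto simp: closed_segment_def)
        have Dz: "c' * dist1 z UU \<le> Delta L S \<pi> z" using c'(2) F' \<pi> by blast
        have conc: "(1 - u) * Delta L S \<pi> x0 + u * Delta L S \<pi> z \<le> Delta L S \<pi> x"
        proof -
          have vx: "Vstar L S x = w \<alpha> \<bullet> x" "Vstar L S x0 = w \<alpha> \<bullet> x0" "Vstar L S z = w \<alpha> \<bullet> z"
            using x x0F zF FP by (auto simp: cell_def)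
          have "(1 - u) * Vfun L S \<pi> x0 + u * Vfun L S \<pi> z \<le> Vfun L S \<pi> x"
            using Vfun_concave[OF \<pi>SX x0SX zSX u(1,2)] u(3) by simp
          moreover have "w \<alpha> \<bullet> x = (1 - u) * (w \<alpha> \<bullet> x0) + u * (w \<alpha> \<bullet> z)"
            using u(3) by (simp add: inner_add_right)
          ultimately show ?thesis using vx by (simp add: Delta_def algebra_simps)
        qed
        have dz0: "0 \<le> dist1 z UU" by (rule distU_nonneg)
        have dx: "dist1 x UU \<le> 2 * (1 - u) + dist1 z UU"
        proof -
          have "dist1 x UU \<le> l1dist x z + dist1 z UU" by (rule dist1_lip[OF Une])
          moreover have "l1dist x z = (1 - u) * l1dist x0 z" using u l1_comb by simp
          moreover have "(1 - u) * l1dist x0 z \<le> (1 - u) * 2"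
            using l1_simplex_le2[OF x0SX zSX] u by (intro mult_left_mono) auto
          ultimately show ?thesis by linarith
        qed
        have A: "(1 - u) * \<delta> \<le> (1 - u) * Delta L S \<pi> x0"
          using \<delta>Pi[OF \<pi>] u by (intro mult_left_mono) auto
        have B: "u * (c' * dist1 z UU) \<le> u * Delta L S \<pi> z"
          using Dz u by (intro mult_left_mono) auto
        have cz0: "0 \<le> c' * dist1 z UU" using c' dz0 by simp
        have "c * dist1 x UU \<le> (1 - u) * \<delta> + u * (c' * dist1 z UU)"
        proof (cases "u \<ge> 1/2")
          case True
          have "c * dist1 x UU \<le> c * (2 * (1 - u) + dist1 z UU)"
            using dx c_pos by (intro mult_left_mono) auto
          moreover have "c * (2 * (1 - u)) \<le> (\<delta>/4) * (2 * (1 - u))"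
            using c_le u by (intro mult_right_mono) auto
          moreover have "c * dist1 z UU \<le> (c'/2) * dist1 z UU"
            using c_le dz0 by (intro mult_right_mono) auto
          moreover have "(1/2) * (c' * dist1 z UU) \<le> u * (c' * dist1 z UU)"
            using True cz0 by (intro mult_right_mono) auto
          moreover have "c * (2 * (1 - u) + dist1 z UU) = c * (2 * (1 - u)) + c * dist1 z UU"
            by (simp add: algebra_simps)
          moreover have "(\<delta>/4) * (2 * (1 - u)) = (1/2) * ((1 - u) * \<delta>)" by (simp add: algebra_simps)
          moreover have "(c'/2) * dist1 z UU = (1/2) * (c' * dist1 z UU)" by simp
          moreover have "0 \<le> (1 - u) * \<delta>" using u \<delta> by simp
          ultimately show ?thesis by linarith
        next
          case False
          have "c * dist1 x UU \<le> (\<delta>/4) * 2" using d0 c_le c_pos by (intro mult_mono) auto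
          moreover have "(1/2) * \<delta> \<le> (1 - u) * \<delta>" using False \<delta> by (intro mult_right_mono) auto
          moreover have "0 \<le> u * (c' * dist1 z UU)" using u cz0 by simp
          ultimately show ?thesis by linarith
        qed
        with A B conc show ?thesis by linarith
      qed
    qed
  qed
qed

lemma main_ctx:
  "\<exists>c>0. \<forall>x\<in>prob_simplex.
     (INF \<pi>\<in>{\<pi>\<in>prob_simplex. \<forall>F\<in>G. F \<noteq> {} \<longrightarrow> \<epsilon> \<le> dist1 \<pi> (NF L S F)}.
        ereal (Delta L S \<pi> x))
     \<ge> ereal (c * dist1 x (\<Union> (faces_F L S m w - G)))"
proof -
  have "\<forall>\<alpha>\<in>{..<m}. \<exists>c>0. \<forall>\<pi>\<in>PiS. \<forall>x\<in>cell L S w \<alpha>. c * dist1 x UU \<le> Delta L S \<pi> x"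
  proof
    fix \<alpha> assume "\<alpha> \<in> {..<m}"
    then have \<alpha>: "\<alpha> < m" by simp
    have "cell L S w \<alpha> face_of cell L S w \<alpha>"
      by (rule face_of_refl[OF polytope_imp_convex[OF cell_polytope[OF \<alpha>]]])
    then show "\<exists>c>0. \<forall>\<pi>\<in>PiS. \<forall>x\<in>cell L S w \<alpha>. c * dist1 x UU \<le> Delta L S \<pi> x"
      by (rule face_bound[OF \<alpha>])
  qed
  from finite_min_const[OF finite_lessThan this distU_nonneg]
  obtain c where c: "c > 0" "\<forall>\<alpha>\<in>{..<m}. \<forall>\<pi>\<in>PiS. \<forall>x\<in>cell L S w \<alpha>. c * dist1 x UU \<le> Delta L S \<pi> x"
    by blast
  show ?thesis
  proof (intro exI[of _ c] conjI ballI)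
    show "c > 0" by (rule c(1))
    fix x :: "real^'z" assume x: "x \<in> prob_simplex"
    obtain \<alpha> where \<alpha>: "\<alpha> < m" "x \<in> cell L S w \<alpha>" using in_some_cell[OF x] by blast
    show "(INF \<pi>\<in>PiS. ereal (Delta L S \<pi> x)) \<ge> ereal (c * dist1 x UU)"
      by (rule INF_greatest) (use c \<alpha> in auto)
  qed
qed

end

end

theorem lemma10:
  fixes L :: "'a::finite \<Rightarrow> 'z::finite \<Rightarrow> real" and S :: "'a \<Rightarrow> 'z \<Rightarrow> 's"
    and m :: nat and w :: "nat \<Rightarrow> real^'z"
    and \<epsilon> :: real and G :: "(real^'z) set set"
  assumes L01: "\<forall>a z. 0 \<le> L a z \<and> L a z \<le> 1"
    and rep: "min_rep L S m w"
    and eps: "\<epsilon> > 0"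
    and GF: "G \<subseteq> faces_F L S m w"
    and Une: "\<Union> (faces_F L S m w - G) \<noteq> {}"
  shows "\<exists>c>0. \<forall>x\<in>prob_simplex.
     (INF \<pi>\<in>{\<pi>\<in>prob_simplex. \<forall>F\<in>G. F \<noteq> {} \<longrightarrow> \<epsilon> \<le> dist1 \<pi> (NF L S F)}.
        ereal (Delta L S \<pi> x))
     \<ge> ereal (c * dist1 x (\<Union> (faces_F L S m w - G)))"
  by (rule main_ctx[OF L01 rep eps GF Une])

end
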